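(* Let $|\xi\rangle=\sum_n\lambda_n|n\rangle\neq|0\rangle$ be a normalized single-mode pure state. Let $P_{\rm even}=\sum_{l\ge0}|2l\rangle\langle2l|$ and $P_{\rm odd}=\sum_{l\ge0}|2l+1\rangle\langle2l+1|$. (i) If $\lambda_n=0$ for all odd $n$, then with the measurements $\Pi^A_0=\Pi^B_0=P_{\rm even}$, $\Pi^A_1=\Pi^B_1=P_{\rm odd}$ one has $P(0,0|0,0)=P(0,0|1,1)=P(1,1|0,1)=P(1,1|1,0)=1$, and hence $\mathcal J=1$ (the maximal value); moreover in this case the outcomes satisfy $a=b=x\oplus y$ with probability one. (ii) If $\lambda_n=0$ for all even $n$, the same conclusion $\mathcal J=1$ holds with $\Pi^A_0=P_{\rm odd}$, $\Pi^A_1=P_{\rm even}$, $\Pi^B_0=P_{\rm even}$, $\Pi^B_1=P_{\rm odd}$. In particular $\mathcal J=1$ for the even-coherent state $|\xi\rangle\propto|\alpha\rangle+|-\alpha\rangle$ ($\alpha\neq0$), the odd-coherent state $|\xi\rangle\propto|\alpha\rangle-|-\alpha\rangle$ ($\alpha\ne0$), and the squeezed vacuum $|\xi\rangle=\exp[\tfrac12(\zeta^*a^2-\zeta a^{\dagger2})]|0\rangle$ ($\zeta\neq0$).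
   Context: Modes $A$ and $B$ have annihilation operators $a,b$ and Fock states $|n\rangle$; $|\alpha\rangle$ denotes a coherent state $e^{-|\alpha|^2/2}\sum_n\frac{\alpha^n}{\sqrt{n!}}|n\rangle$. For a normalized single-mode state $|\xi\rangle=\sum_n\lambda_n|n\rangle$ with $|\lambda_0|<1$ and input bits $x,y\in\{0,1\}$, the phase-encoded generalized NOON state is $|\Phi_{xy}\rangle=\mathcal N_{xy}^{-1/2}\big((-1)^x|\xi\rangle_A|0\rangle_B+(-1)^y|0\rangle_A|\xi\rangle_B\big)$ with $\mathcal N_{xy}=2(1+(-1)^{x+y}|\lambda_0|^2)$. The lossless 50:50 beam splitter is the unitary $U$ with $U|0,0\rangle=|0,0\rangle$, $Ua^\dagger U^\dagger=(a^\dagger+b^\dagger)/\sqrt2$, $Ub^\dagger U^\dagger=(a^\dagger-b^\dagger)/\sqrt2$; set $|\Phi''_{xy}\rangle=U|\Phi_{xy}\rangle$. For two-outcome projective measurements $\{\Pi^A_0,\Pi^A_1\}$, $\{\Pi^B_0,\Pi^B_1\}$, $P(a,b|x,y)=\langle\Phi''_{xy}|\Pi^A_a\otimes\Pi^B_b|\Phi''_{xy}\rangle$ and $\mathcal J=\frac14\big[P(0,0|0,0)+P(0,0|1,1)+P(1,1|0,1)+P(1,1|1,0)\big]$. $\oplus$ is addition mod 2. *)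

theory Defs
  imports "HOL-Analysis.Analysis"
begin

text \<open>Single-mode states are given by their Fock amplitudes (nat => complex);
two-mode states (modes A,B) by amplitudes indexed by (n_A, n_B).\<close>

definition normalized :: "(nat \<Rightarrow> complex) \<Rightarrow> bool" where
  "normalized l \<longleftrightarrow> ((\<lambda>n. (cmod (l n))\<^sup>2) has_sum 1) UNIV"

definition noon_norm :: "(nat \<Rightarrow> complex) \<Rightarrow> nat \<Rightarrow> nat \<Rightarrow> real" where
  "noon_norm l x y = 2 * (1 + (-1) ^ (x + y) * (cmod (l 0))\<^sup>2)"

definition noon :: "(nat \<Rightarrow> complex) \<Rightarrow> nat \<Rightarrow> nat \<Rightarrow> (nat \<times> nat \<Rightarrow> complex)" where
  "noon l x y = (\<lambda>(m, n). complex_of_real (1 / sqrt (noon_norm l x y)) *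
      ((-1) ^ x * (if n = 0 then l m else 0) + (-1) ^ y * (if m = 0 then l n else 0)))"

text \<open>Matrix element <k,j| U |m,n> of the 50:50 beam splitter determined by
  U|0,0> = |0,0>, U a^+ U^+ = (a^+ + b^+)/sqrt 2, U b^+ U^+ = (a^+ - b^+)/sqrt 2, i.e.
  U|m,n> = ((a^+ + b^+)/sqrt 2)^m ((a^+ - b^+)/sqrt 2)^n / sqrt(m! n!) |0,0>.\<close>
definition bs_amp :: "nat \<Rightarrow> nat \<Rightarrow> nat \<Rightarrow> nat \<Rightarrow> real" where
  "bs_amp k j m n =
     (if k + j = m + n then
        sqrt (fact k * fact j / (fact m * fact n * 2 ^ (m + n))) *
        (\<Sum>p\<le>m. \<Sum>q\<le>n. if p + q = k
             then real (m choose p) * real (n choose q) * (-1) ^ (n - q) else 0)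
      else 0)"

text \<open>Action of U on a two-mode state (U conserves total photon number, so each
  output amplitude is a finite sum).\<close>
definition beam_splitter :: "(nat \<times> nat \<Rightarrow> complex) \<Rightarrow> (nat \<times> nat \<Rightarrow> complex)" where
  "beam_splitter psi = (\<lambda>(k, j).
      \<Sum>m\<le>k + j. complex_of_real (bs_amp k j m (k + j - m)) * psi (m, k + j - m))"

text \<open>Projectors diagonal in the Fock basis are represented by the set S of Fock
  indices they project onto (Pi_S = sum_{n in S} |n><n|).\<close>
definition Peven :: "nat set" where "Peven = {n. even n}"
definition Podd :: "nat set" where "Podd = {n. odd n}"

definition proj_expect :: "nat set \<Rightarrow> nat set \<Rightarrow> (nat \<times> nat \<Rightarrow> complex) \<Rightarrow> real" where
  "proj_expect SA SB psi = infsum (\<lambda>kj. (cmod (psi kj))\<^sup>2) (SA \<times> SB)"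

text \<open>P(a,b|x,y) for measurements MA, MB (outcome => projector) and state xi.\<close>
definition Prob :: "(nat \<Rightarrow> nat set) \<Rightarrow> (nat \<Rightarrow> nat set) \<Rightarrow> (nat \<Rightarrow> complex)
     \<Rightarrow> nat \<Rightarrow> nat \<Rightarrow> nat \<Rightarrow> nat \<Rightarrow> real" where
  "Prob MA MB l a b x y = proj_expect (MA a) (MB b) (beam_splitter (noon l x y))"

definition Jval :: "(nat \<Rightarrow> nat set) \<Rightarrow> (nat \<Rightarrow> nat set) \<Rightarrow> (nat \<Rightarrow> complex) \<Rightarrow> real" where
  "Jval MA MB l = (Prob MA MB l 0 0 0 0 + Prob MA MB l 0 0 1 1
                  + Prob MA MB l 1 1 0 1 + Prob MA MB l 1 1 1 0) / 4"

definition meas_parity :: "nat \<Rightarrow> nat set" where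
  "meas_parity a = (if a = 0 then Peven else Podd)"
definition meas_flipped :: "nat \<Rightarrow> nat set" where
  "meas_flipped a = (if a = 0 then Podd else Peven)"

definition coh :: "complex \<Rightarrow> nat \<Rightarrow> complex" where
  "coh \<alpha> n = complex_of_real (exp (- (cmod \<alpha>)\<^sup>2 / 2)) * \<alpha> ^ n / complex_of_real (sqrt (fact n))"

text \<open>Squeezed vacuum S(zeta)|0>, S(zeta) = exp[(zeta^* a^2 - zeta a^+2)/2], via its
  standard Fock expansion (zeta = r e^{i theta}):
  (cosh r)^{-1/2} sum_m (-e^{i theta} tanh r)^m sqrt((2m)!)/(2^m m!) |2m>.\<close>
definition sqvac :: "complex \<Rightarrow> nat \<Rightarrow> complex" where
  "sqvac \<zeta> n = (if even n then
      complex_of_real (1 / sqrt (cosh (cmod \<zeta>))) *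
      (- (\<zeta> / complex_of_real (cmod \<zeta>)) * complex_of_real (tanh (cmod \<zeta>))) ^ (n div 2) *
      complex_of_real (sqrt (fact n) / (2 ^ (n div 2) * fact (n div 2)))
    else 0)"

end

theory Submission
  imports Defs
begin


definition BA :: "nat \<Rightarrow> nat \<Rightarrow> real" where
  "BA k j = sqrt (fact k * fact j / (fact (k+j) * 2 ^ (k+j))) * real ((k+j) choose k)"

lemma bs1: "bs_amp k j (k+j) 0 = BA k j"
proof -
  have "(\<Sum>p\<le>k+j. \<Sum>q\<le>(0::nat). if p + q = k
             then real ((k+j) choose p) * real (0 choose q) * (-1) ^ (0 - q) else 0)
        = (\<Sum>p\<le>k+j. if p = k then real ((k+j) choose p) else 0)"
    by (simp only: atMost_0 sum.insert finite.emptyI empty_iff sum.empty) simp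
  also have "\<dots> = real ((k+j) choose k)" by (simp add: sum.delta)
  finally show ?thesis unfolding bs_amp_def BA_def by (simp add: atMost_0)
qed

lemma bs2: "bs_amp k j 0 (k+j) = (-1)^j * BA k j"
proof -
  have "(\<Sum>p\<le>(0::nat). \<Sum>q\<le>k+j. if p + q = k
             then real (0 choose p) * real ((k+j) choose q) * (-1) ^ (k+j - q) else 0)
        = (\<Sum>q\<le>k+j. if q = k then real ((k+j) choose q) * (-1) ^ (k+j - q) else 0)"
    by (simp only: atMost_0 sum.insert finite.emptyI empty_iff sum.empty) simp
  also have "\<dots> = real ((k+j) choose k) * (-1)^j" by (simp add: sum.delta)
  finally show ?thesis unfolding bs_amp_def BA_def by (simp add: mult_ac)
qed

lemma BA_sq: "(BA k j)^2 = real ((k+j) choose k) / 2^(k+j)"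
proof -
  have c: "real ((k+j) choose k) = fact (k+j) / (fact k * fact j)"
    using binomial_fact[of k "k+j", where 'a=real] by (simp add: atMost_0)
  have "(BA k j)^2 = fact k * fact j / (fact (k+j) * 2 ^ (k+j)) * (real ((k+j) choose k))^2"
    unfolding BA_def by (simp add: power_mult_distrib)
  also have "\<dots> = real ((k+j) choose k) / 2^(k+j)"
    unfolding c by (simp add: power2_eq_square field_simps)
  finally show ?thesis .
qed

lemma bs_out:
  "beam_splitter (noon l x y) (k, j) =
     complex_of_real (1 / sqrt (noon_norm l x y) * BA k j) * l (k+j) * ((-1)^x + (-1)^y * (-1)^j)"
proof -
  define s where "s = k + j"
  define c where "c = complex_of_real (1 / sqrt (noon_norm l x y))"
  have nm: "noon l x y (m, s - m) = c * (-1)^x * (if m = s then l m else 0)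
             + c * (-1)^y * (if m = 0 then l s else 0)" if "m \<le> s" for m
    using that unfolding noon_def c_def by (auto simp: algebra_simps)
  have "beam_splitter (noon l x y) (k, j) =
     (\<Sum>m\<le>s. complex_of_real (bs_amp k j m (s - m)) * noon l x y (m, s - m))"
    unfolding beam_splitter_def s_def by (simp add: atMost_0)
  also have "\<dots> = (\<Sum>m\<le>s. (if m = s then complex_of_real (bs_amp k j m (s - m)) * c * (-1)^x * l m else 0))
       + (\<Sum>m\<le>s. (if m = 0 then complex_of_real (bs_amp k j m (s - m)) * c * (-1)^y * l s else 0))"
    by (subst sum.distrib[symmetric], rule sum.cong) (auto simp: nm algebra_simps)
  also have "\<dots> = complex_of_real (bs_amp k j s 0) * c * (-1)^x * l s
       + complex_of_real (bs_amp k j 0 s) * c * (-1)^y * l s"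
    by (simp add: sum.delta)
  also have "\<dots> = c * complex_of_real (BA k j) * l s * ((-1)^x + (-1)^y * (-1)^j)"
    unfolding s_def bs1 bs2 by (simp add: algebra_simps)
  finally show ?thesis unfolding c_def s_def by (simp add: atMost_0)
qed



lemma diag_has_sum:
  fixes g :: "nat \<times> nat \<Rightarrow> real"
  assumes nn: "\<And>kj. g kj \<ge> 0" and h: "((\<lambda>s. \<Sum>k\<le>s. g (k, s-k)) has_sum V) UNIV"
  shows "(g has_sum V) UNIV"
proof -
  have bij: "bij_betw (\<lambda>(s,k). (k, s-k)) (SIGMA s:UNIV. {..s::nat}) UNIV"
  proof (rule bij_betw_imageI)
    show "inj_on (\<lambda>(s,k). (k, s-k)) (SIGMA s:UNIV. {..s::nat})"
      by (auto simp: inj_on_def)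
    show "(\<lambda>(s,k). (k, s-k)) ` (SIGMA s:UNIV. {..s::nat}) = UNIV"
      apply (auto simp: image_iff)
      by (metis add_diff_cancel_left' le_add1)
  qed
  define f where "f = (\<lambda>(s::nat,k::nat). g (k, s-k))"
  have inner: "((\<lambda>k. f (s, k)) has_sum (\<Sum>k\<le>s. g(k,s-k))) {..s}" for s
    unfolding f_def by simp
  have summ: "f summable_on (SIGMA s:UNIV. {..s})"
    by (rule summable_on_SigmaI[OF inner]) (use h has_sum_imp_summable nn in \<open>auto simp: f_def\<close>)
  have "(f has_sum V) (SIGMA s:UNIV. {..s})"
    by (rule has_sum_SigmaI[OF inner h summ])
  then have "((\<lambda>x. g ((\<lambda>(s,k). (k, s-k)) x)) has_sum V) (SIGMA s:UNIV. {..s})"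
    by (simp add: f_def case_prod_unfold)
  then show ?thesis using has_sum_reindex_bij_betw[OF bij] by blast
qed

lemma phase_sq: "(cmod ((-1)^x + (-1)^y * (-1)^j :: complex))^2 = (if even (x+y+j) then 4 else 0)"
  by (cases "even x"; cases "even y"; cases "even j") (auto simp: minus_one_power_iff)

definition gam :: "nat \<Rightarrow> nat \<Rightarrow> nat set \<Rightarrow> nat set \<Rightarrow> nat \<Rightarrow> real" where
  "gam x y SA SB s = (\<Sum>k\<le>s. if k \<in> SA \<and> s-k \<in> SB \<and> even (x+y+(s-k)) then 4 * real (s choose k) / 2^s else 0)"

lemma prob_one:
  assumes norm: "normalized l" and Npos: "noon_norm l x y > 0"
  and key: "\<And>s. (cmod (l s))^2 * gam x y SA SB s
     = 2*(cmod (l s))^2 + (if s = 0 then 2*(-1)^(x+y)*(cmod (l 0))^2 else 0)"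
  shows "proj_expect SA SB (beam_splitter (noon l x y)) = 1"
proof -
  define N where "N = noon_norm l x y"
  have N: "N > 0" using Npos N_def by simp
  define w where "w = (\<lambda>kj. (cmod (beam_splitter (noon l x y) kj))^2)"
  have w: "w (k,j) = (1/N) * (real ((k+j) choose k) / 2^(k+j)) * (cmod (l (k+j)))^2
            * (if even (x+y+j) then 4 else 0)" for k j
  proof -
    have "w (k,j) = (1 / sqrt N * BA k j)^2 * (cmod (l (k+j)))^2 * (cmod ((-1)^x + (-1)^y * (-1)^j :: complex))^2"
      unfolding w_def bs_out N_def by (simp only: norm_mult power_mult_distrib norm_of_real power2_abs)
    also have "(1 / sqrt N * BA k j)^2 = (1/N) * (real ((k+j) choose k) / 2^(k+j))"
      using N by (simp add: power_mult_distrib BA_sq power_divide)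
    finally show ?thesis unfolding phase_sq by simp
  qed
  define g where "g = (\<lambda>kj. if kj \<in> SA \<times> SB then w kj else 0)"
  have gs: "(\<Sum>k\<le>s. g (k, s-k)) = (1/N) * ((cmod (l s))^2 * gam x y SA SB s)" for s
    unfolding g_def gam_def sum_distrib_left
    using N by (intro sum.cong) (auto simp: w field_simps)
  have h1: "((\<lambda>s. 2*(cmod (l s))^2) has_sum 2) UNIV"
    using has_sum_cmult_right[OF norm[unfolded normalized_def], of 2] by simp
  have h2: "((\<lambda>s. if s = 0 then 2*(-1)^(x+y)*(cmod (l 0))^2 else 0) has_sum (2*(-1)^(x+y)*(cmod (l 0))^2)) (UNIV::nat set)"
    using has_sum_cong_neutral[of "{0::nat}" UNIV "\<lambda>s. if s = 0 then 2*(-1)^(x+y)*(cmod (l 0))^2 else (0::real)"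
        "\<lambda>s. if s = 0 then 2*(-1)^(x+y)*(cmod (l 0))^2 else 0"]
      has_sum_finite[of "{0::nat}" "\<lambda>s. if s = 0 then 2*(-1)^(x+y)*(cmod (l 0))^2 else (0::real)"] by simp
  have "((\<lambda>s. (1/N) * (2*(cmod (l s))^2 + (if s = 0 then 2*(-1)^(x+y)*(cmod (l 0))^2 else 0)))
        has_sum ((1/N) * (2 + 2*(-1)^(x+y)*(cmod (l 0))^2))) UNIV"
    by (rule has_sum_cmult_right, rule has_sum_add[OF h1 h2])
  also have "(1/N) * (2 + 2*(-1)^(x+y)*(cmod (l 0))^2) = 1"
    using N unfolding N_def noon_norm_def by (simp add: field_simps)
  finally have "((\<lambda>s. \<Sum>k\<le>s. g (k, s-k)) has_sum 1) UNIV"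
    unfolding gs key .
  then have "(g has_sum 1) UNIV"
    by (rule diag_has_sum[rotated]) (auto simp: g_def w_def)
  then have "(w has_sum 1) (SA \<times> SB)"
    using has_sum_cong_neutral[of "SA \<times> SB" UNIV w g] by (simp add: g_def)
  then show ?thesis unfolding proj_expect_def w_def by (rule infsumI)
qed



lemma even_half: "s > 0 \<Longrightarrow> (\<Sum>k\<le>s. if even k then 4 * real (s choose k) / 2^s else 0) = 2"
proof -
  assume s: "s > 0"
  have "(\<Sum>k\<le>s. if even k then 4 * real (s choose k) / 2^s else 0)
      = (2 / 2^s) * (2 * (\<Sum>k\<le>s. if even k then real (s choose k) else 0))"
    unfolding sum_distrib_left by (rule sum.cong) auto
  also have "\<dots> = 2" using choose_even_sum[OF s, where 'a=real] by simp
  finally show ?thesis .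
qed

lemma odd_half: "s > 0 \<Longrightarrow> (\<Sum>k\<le>s. if odd k then 4 * real (s choose k) / 2^s else 0) = 2"
proof -
  assume s: "s > 0"
  have "(\<Sum>k\<le>s. if odd k then 4 * real (s choose k) / 2^s else 0)
      = (2 / 2^s) * (2 * (\<Sum>k\<le>s. if odd k then real (s choose k) else 0))"
    unfolding sum_distrib_left by (rule sum.cong) auto
  also have "\<dots> = 2" using choose_odd_sum[OF s, where 'a=real] by simp
  finally show ?thesis .
qed

lemma gam1: "even (x+y) \<Longrightarrow> even s \<Longrightarrow> s > 0 \<Longrightarrow> gam x y Peven Peven s = 2"
  unfolding gam_def Peven_def
  by (subst even_half[symmetric], assumption, rule sum.cong) auto

lemma gam2: "odd (x+y) \<Longrightarrow> even s \<Longrightarrow> s > 0 \<Longrightarrow> gam x y Podd Podd s = 2"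
  unfolding gam_def Podd_def
  by (subst odd_half[symmetric], assumption, rule sum.cong) auto

lemma gam3: "even (x+y) \<Longrightarrow> odd s \<Longrightarrow> gam x y Podd Peven s = 2"
proof -
  assume a: "even (x+y)" "odd s"
  then have s: "s > 0" by (cases s) auto
  have "gam x y Podd Peven s = (\<Sum>k\<le>s. if odd k then 4 * real (s choose k) / 2^s else 0)"
    unfolding gam_def Podd_def Peven_def by (rule sum.cong) (use a in auto)
  then show ?thesis using odd_half[OF s] by simp
qed

lemma gam4: "odd (x+y) \<Longrightarrow> odd s \<Longrightarrow> gam x y Peven Podd s = 2"
proof -
  assume a: "odd (x+y)" "odd s"
  then have s: "s > 0" by (cases s) auto
  have "gam x y Peven Podd s = (\<Sum>k\<le>s. if even k then 4 * real (s choose k) / 2^s else 0)"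
    unfolding gam_def Podd_def Peven_def by (rule sum.cong) (use a in auto)
  then show ?thesis using even_half[OF s] by simp
qed

lemma Npos: "cmod (l 0) < 1 \<Longrightarrow> noon_norm l x y > 0"
proof -
  assume a: "cmod (l 0) < 1"
  have "(cmod (l 0))^2 < 1" using a by (simp add: abs_square_less_1)
  then show ?thesis unfolding noon_norm_def
    by (cases "even (x+y)") (auto simp: minus_one_power_iff intro: add_pos_nonneg)
qed

lemma caseI:
  assumes n: "normalized l" and l0: "cmod (l 0) < 1" and ev: "\<forall>n. odd n \<longrightarrow> l n = 0"
  shows "even (x+y) \<Longrightarrow> proj_expect Peven Peven (beam_splitter (noon l x y)) = 1"
    and "odd (x+y) \<Longrightarrow> proj_expect Podd Podd (beam_splitter (noon l x y)) = 1"
proof -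
  assume p: "even (x+y)"
  show "proj_expect Peven Peven (beam_splitter (noon l x y)) = 1"
  proof (rule prob_one[OF n Npos[of l, OF l0]])
    fix s
    show "(cmod (l s))^2 * gam x y Peven Peven s
     = 2*(cmod (l s))^2 + (if s = 0 then 2*(-1)^(x+y)*(cmod (l 0))^2 else 0)"
    proof (cases "odd s")
      case True then show ?thesis using ev by auto
    next
      case False
      show ?thesis
      proof (cases "s = 0")
        case True then show ?thesis using p by (simp add: gam_def Peven_def)
      next
        case s0: False then show ?thesis using False p gam1 by simp
      qed
    qed
  qed
next
  assume p: "odd (x+y)"
  show "proj_expect Podd Podd (beam_splitter (noon l x y)) = 1"
  proof (rule prob_one[OF n Npos[of l, OF l0]])
    fix s
    show "(cmod (l s))^2 * gam x y Podd Podd s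
     = 2*(cmod (l s))^2 + (if s = 0 then 2*(-1)^(x+y)*(cmod (l 0))^2 else 0)"
    proof (cases "odd s")
      case True then show ?thesis using ev by auto
    next
      case False
      show ?thesis
      proof (cases "s = 0")
        case True then show ?thesis using p by (simp add: gam_def Podd_def)
      next
        case s0: False then show ?thesis using False p gam2 by simp
      qed
    qed
  qed
qed

lemma caseII:
  assumes n: "normalized l" and od: "\<forall>n. even n \<longrightarrow> l n = 0"
  shows "even (x+y) \<Longrightarrow> proj_expect Podd Peven (beam_splitter (noon l x y)) = 1"
    and "odd (x+y) \<Longrightarrow> proj_expect Peven Podd (beam_splitter (noon l x y)) = 1"
proof -
  have l0: "cmod (l 0) < 1" using od by simp
  have z: "l 0 = 0" using od by simp
  {
    assume p: "even (x+y)"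
    show "proj_expect Podd Peven (beam_splitter (noon l x y)) = 1"
      apply (rule prob_one[OF n Npos[of l, OF l0]])
      subgoal for s by (cases "odd s") (use od p gam3 z in auto)
      done
  }
  {
    assume p: "odd (x+y)"
    show "proj_expect Peven Podd (beam_splitter (noon l x y)) = 1"
      apply (rule prob_one[OF n Npos[of l, OF l0]])
      subgoal for s by (cases "odd s") (use od p gam4 z in auto)
      done
  }
qed



lemma partI:
  assumes "normalized l" "cmod (l 0) < 1" "\<forall>n. odd n \<longrightarrow> l n = 0"
  shows "Prob meas_parity meas_parity l 0 0 0 0 = 1 \<and>
       Prob meas_parity meas_parity l 0 0 1 1 = 1 \<and>
       Prob meas_parity meas_parity l 1 1 0 1 = 1 \<and>
       Prob meas_parity meas_parity l 1 1 1 0 = 1 \<and>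
       Jval meas_parity meas_parity l = 1 \<and>
       (\<forall>x\<in>{0,1}. \<forall>y\<in>{0,1}.
          Prob meas_parity meas_parity l ((x + y) mod 2) ((x + y) mod 2) x y = 1)"
proof -
  have p1: "Prob meas_parity meas_parity l 0 0 0 0 = 1"
    unfolding Prob_def meas_parity_def using caseI(1)[OF assms, of 0 0] by simp
  have p2: "Prob meas_parity meas_parity l 0 0 1 1 = 1"
    unfolding Prob_def meas_parity_def using caseI(1)[OF assms, of 1 1] by simp
  have p3: "Prob meas_parity meas_parity l 1 1 0 1 = 1"
    unfolding Prob_def meas_parity_def using caseI(2)[OF assms, of 0 1] by simp
  have p4: "Prob meas_parity meas_parity l 1 1 1 0 = 1"
    unfolding Prob_def meas_parity_def using caseI(2)[OF assms, of 1 0] by simp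
  show ?thesis using p1 p2 p3 p4 unfolding Jval_def by simp
qed

lemma partII:
  assumes "normalized l" "\<forall>n. even n \<longrightarrow> l n = 0"
  shows "Jval meas_flipped meas_parity l = 1"
proof -
  have p1: "Prob meas_flipped meas_parity l 0 0 0 0 = 1"
    unfolding Prob_def meas_parity_def meas_flipped_def using caseII(1)[OF assms, of 0 0] by simp
  have p2: "Prob meas_flipped meas_parity l 0 0 1 1 = 1"
    unfolding Prob_def meas_parity_def meas_flipped_def using caseII(1)[OF assms, of 1 1] by simp
  have p3: "Prob meas_flipped meas_parity l 1 1 0 1 = 1"
    unfolding Prob_def meas_parity_def meas_flipped_def using caseII(2)[OF assms, of 0 1] by simp
  have p4: "Prob meas_flipped meas_parity l 1 1 1 0 = 1"
    unfolding Prob_def meas_parity_def meas_flipped_def using caseII(2)[OF assms, of 1 0] by simp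
  show ?thesis using p1 p2 p3 p4 unfolding Jval_def by simp
qed


lemma lam0_lt1:
  assumes n: "normalized l" and "m \<noteq> 0" "l m \<noteq> 0"
  shows "cmod (l 0) < 1"
proof -
  have "(cmod (l 0))^2 + (cmod (l m))^2 \<le> 1"
  proof -
    have "((\<lambda>n. (cmod (l n))\<^sup>2) has_sum (\<Sum>n\<in>{0,m}. (cmod (l n))\<^sup>2)) {0,m}"
      by (rule has_sum_finite) simp
    from has_sum_mono_neutral[OF this n[unfolded normalized_def]]
    show ?thesis using assms by simp
  qed
  moreover have "(cmod (l m))^2 > 0" using assms by simp
  ultimately have "(cmod (l 0))^2 < 1" by linarith
  then show ?thesis by (simp add: abs_square_less_1)
qed

lemma normalized_nonzero: "normalized l \<Longrightarrow> \<exists>n. l n \<noteq> 0"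
proof (rule ccontr)
  assume n: "normalized l" and "\<not> (\<exists>n. l n \<noteq> 0)"
  then have h0: "((\<lambda>n. (cmod (l n))\<^sup>2) has_sum 0) UNIV" by simp
  have h1: "((\<lambda>n. (cmod (l n))\<^sup>2) has_sum 1) UNIV" using n unfolding normalized_def .
  from has_sum_unique[OF h0 h1] show False by simp
qed

lemma coh_neg: "coh (- \<alpha>) n = (-1)^n * coh \<alpha> n"
  unfolding coh_def by (simp add: power_minus[of \<alpha>])

lemma evencoh:
  assumes "\<alpha> \<noteq> 0" "normalized (\<lambda>n. c * (coh \<alpha> n + coh (- \<alpha>) n))"
  shows "Jval meas_parity meas_parity (\<lambda>n. c * (coh \<alpha> n + coh (- \<alpha>) n)) = 1"
proof -
  define l where "l = (\<lambda>n. c * (coh \<alpha> n + coh (- \<alpha>) n))"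
  have l: "l n = c * (1 + (-1)^n) * coh \<alpha> n" for n
    unfolding l_def coh_neg by (simp add: algebra_simps)
  have n: "normalized l" using assms l_def by simp
  obtain m where m: "l m \<noteq> 0" using normalized_nonzero[OF n] by blast
  have c: "c \<noteq> 0"
  proof
    assume "c = 0" then have "l m = 0" using l[of m] by simp
    with m show False by simp
  qed
  have ch: "coh \<alpha> 2 \<noteq> 0" using assms(1) unfolding coh_def by (simp add: fact_numeral)
  have "l 2 = c * 2 * coh \<alpha> 2" using l[of 2] by simp
  then have "l 2 \<noteq> 0" using c ch by simp
  then have "cmod (l 0) < 1" using lam0_lt1[OF n, of 2] by simp
  moreover have "\<forall>n. odd n \<longrightarrow> l n = 0" using l by simp
  ultimately have "Jval meas_parity meas_parity l = 1" using partI[OF n] by blast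
  then show ?thesis unfolding l_def .
qed

lemma oddcoh:
  assumes "normalized (\<lambda>n. c * (coh \<alpha> n - coh (- \<alpha>) n))"
  shows "Jval meas_flipped meas_parity (\<lambda>n. c * (coh \<alpha> n - coh (- \<alpha>) n)) = 1"
proof -
  define l where "l = (\<lambda>n. c * (coh \<alpha> n - coh (- \<alpha>) n))"
  have l: "l n = c * (1 - (-1)^n) * coh \<alpha> n" for n
    unfolding l_def coh_neg by (simp add: algebra_simps)
  have n: "normalized l" using assms l_def by simp
  have "\<forall>n. even n \<longrightarrow> l n = 0" using l by simp
  from partII[OF n this] show ?thesis unfolding l_def .
qed



lemma aux:
  fixes X P F z :: real
  assumes "P \<noteq> 0" "F \<noteq> 0" "z \<noteq> 0"
  shows "X/(P*F^2) * ((2*z-1)/(2*z)) = ((2*z)*(2*z-1)*X)/(4*P*(z*F)^2)"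
  using assms by (simp add: field_simps power2_eq_square)

lemma gch: "((-(1/2)::real) gchoose m) * (-1)^m = fact (2*m) / (4^m * (fact m)^2)"
proof (induction m)
  case 0 then show ?case by simp
next
  case (Suc m)
  have rec: "(-(1/2)::real) gchoose (Suc m) = (-(1/2) - real m) / real (Suc m) * ((-(1/2)) gchoose m)"
    using gbinomial_mult_1[of "-(1/2)::real" m] by (simp add: field_simps)
  have f: "fact (2 * Suc m) = (real (2*m+2) * real (2*m+1)) * (fact (2*m) :: real)"
    by (simp add: algebra_simps)
  have m1: "1 + real m \<noteq> 0" "real m + 1 \<noteq> 0" "2 + 2 * real m \<noteq> 0" by linarith+
  have "((-(1/2)::real) gchoose (Suc m)) * (-1)^(Suc m)
     = (((-(1/2)) gchoose m) * (-1)^m) * ((2*real m+1)/(2*(real m+1)))"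
    unfolding rec by (simp add: field_simps m1)
  also have "\<dots> = (fact (2*m) / (4^m * (fact m)^2)) * ((2*real m+1)/(2*(real m+1)))"
    by (simp only: Suc.IH)
  also have "\<dots> = fact (2 * Suc m) / (4^(Suc m) * (fact (Suc m))^2)"
  proof -
    define z where "z = real m + 1"
    have z0: "z \<noteq> 0" unfolding z_def by linarith
    have e1: "2*real m+1 = 2*z - 1" "real m + 1 = z" unfolding z_def by simp_all
    have e2: "fact (2 * Suc m) = (2*z)*(2*z-1)*(fact (2*m) :: real)"
      unfolding f z_def by simp
    have e3: "(fact (Suc m) :: real) = z * fact m" unfolding z_def by simp
    have e4: "(4::real)^(Suc m) = 4 * 4^m" by simp
    show ?thesis unfolding e1 e2 e3 e4
      using aux[of "4^m" "fact m" z "fact (2*m)"] z0 by simp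
  qed
  finally show ?case .
qed

lemma one_minus_tanh_sq: "1 - (tanh (r::real))^2 = 1 / (cosh r)^2"
proof -
  have c: "cosh r \<noteq> 0" using cosh_real_pos[of r] by linarith
  have "1 - (tanh r)^2 = (cosh r ^2 - sinh r ^2) / cosh r ^ 2"
    unfolding tanh_def using c by (simp add: field_simps power_divide)
  also have "\<dots> = 1 / (cosh r)^2" using hyperbolic_pythagoras[of r] by simp
  finally show ?thesis .
qed

lemma sq_sums:
  assumes "(r::real) > 0"
  shows "(\<lambda>m. (1 / cosh r) * (((-(1/2)::real) gchoose m) * (- (tanh r ^ 2))^m)) sums 1"
proof -
  have u1: "\<bar>- (tanh r ^ 2)\<bar> < 1" using tanh_real_lt_1[of r] tanh_real_gt_neg1[of r]
    by (simp add: abs_square_less_1)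
  have p: "(1 + - (tanh r ^ 2)) powr (-(1/2)) = cosh r"
  proof -
    have "1 + - (tanh r ^ 2) = 1 / (cosh r)^2" using one_minus_tanh_sq[of r] by simp
    then have "(1 + - (tanh r ^ 2)) powr (1/2) = 1 / cosh r"
      by (simp add: powr_half_sqrt real_sqrt_divide)
    then show ?thesis by (simp add: powr_minus)
  qed
  have eq: "(1 / cosh r) * ((1 + - (tanh r ^ 2)) powr (-(1/2))) = 1"
    unfolding p using cosh_real_pos[of r] by simp
  from sums_mult[OF gen_binomial_real[OF u1, of "-(1/2)"], of "1 / cosh r"]
  show ?thesis unfolding eq .
qed

lemma sqvac_norm:
  assumes z: "\<zeta> \<noteq> 0"
  shows "normalized (sqvac \<zeta>)"
proof -
  define r where "r = cmod \<zeta>"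
  have r: "r > 0" using z r_def by simp
  define F where "F = (\<lambda>n. (cmod (sqvac \<zeta> n))^2)"
  have Fodd: "odd n \<Longrightarrow> F n = 0" for n unfolding F_def sqvac_def by simp
  have Fev: "F (2*m) = (1 / cosh r) * (((-(1/2)::real) gchoose m) * (- (tanh r ^ 2))^m)" for m
  proof -
    define w where "w = - (\<zeta> / complex_of_real r) * complex_of_real (tanh r)"
    have nz: "cmod w = \<bar>tanh r\<bar>"
      using z unfolding w_def r_def by (simp add: norm_mult norm_divide)
    have sv: "sqvac \<zeta> (2*m) = complex_of_real (1 / sqrt (cosh r)) * w^m *
          complex_of_real (sqrt (fact (2*m)) / (2^m * fact m))"
      unfolding sqvac_def w_def r_def by simp
    have ab: "(\<bar>tanh r\<bar>^m)^2 = ((tanh r)^2)^m"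
    proof -
      have "(\<bar>tanh r\<bar>^m)^2 = \<bar>tanh r\<bar>^(m*2)" by (simp only: power_mult)
      also have "\<dots> = (\<bar>tanh r\<bar>^2)^m" by (simp only: mult.commute[of m 2] power_mult)
      finally show ?thesis by simp
    qed
    have a2: "(1 / sqrt (cosh r))^2 = 1 / cosh r"
      using cosh_real_pos[of r] by (simp add: power_divide)
    have c2: "(sqrt (fact (2*m)) / (2^m * fact m))^2 = fact (2*m) / (4^m * (fact m)^2)"
      by (simp add: power_divide power_mult_distrib flip: power_mult)
         (simp add: mult.commute[of m 2] power_mult)
    have "F (2*m) = (\<bar>1 / sqrt (cosh r)\<bar> * \<bar>tanh r\<bar>^m * \<bar>sqrt (fact (2*m)) / (2^m * fact m)\<bar>)^2"
      unfolding F_def sv nz[symmetric] by (simp only: norm_mult norm_power norm_of_real)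
    also have "\<dots> = (1 / sqrt (cosh r))^2 * (\<bar>tanh r\<bar>^m)^2 * (sqrt (fact (2*m)) / (2^m * fact m))^2"
      by (simp only: power_mult_distrib power2_abs)
    also have "\<dots> = (1 / cosh r) * ((tanh r ^ 2)^m * (fact (2*m) / (4^m * (fact m)^2)))"
      unfolding a2 ab c2 by (simp only: mult_ac)
    also have "\<dots> = (1 / cosh r) * (((-(1/2)::real) gchoose m) * (- (tanh r ^ 2))^m)"
      unfolding gch[symmetric] by (simp add: power_minus[of "tanh r ^ 2"] mult_ac)
    finally show ?thesis .
  qed
  have Fnn: "0 \<le> F n" for n unfolding F_def by simp
  have "((\<lambda>m. F (2*m)) has_sum 1) UNIV"
    unfolding Fev by (rule sums_nonneg_imp_has_sum[OF sq_sums[OF r]]) (metis Fev Fnn)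
  then have "(F has_sum 1) (range (\<lambda>m. 2*m))"
    using has_sum_reindex[of "\<lambda>m::nat. 2*m" UNIV F 1] by (simp add: inj_on_def o_def)
  then have "(F has_sum 1) UNIV"
    by (rule has_sum_cong_neutral[THEN iffD1, rotated -1]) (use Fodd in \<open>auto elim!: evenE\<close>)
  then show ?thesis unfolding normalized_def F_def .
qed

lemma sqvac_J:
  assumes z: "\<zeta> \<noteq> 0"
  shows "Jval meas_parity meas_parity (sqvac \<zeta>) = 1"
proof -
  define r where "r = cmod \<zeta>"
  have r: "r > 0" using z r_def by simp
  have "cosh r \<noteq> 1" using r by simp
  then have c: "cosh r > 1" using cosh_real_ge_1[of r] by linarith
  have "sqvac \<zeta> 0 = complex_of_real (1 / sqrt (cosh r))" unfolding sqvac_def r_def by simp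
  then have "cmod (sqvac \<zeta> 0) = 1 / sqrt (cosh r)" by (simp add: norm_divide)
  also have "\<dots> < 1" using c by simp
  finally have l0: "cmod (sqvac \<zeta> 0) < 1" .
  have od: "\<forall>n. odd n \<longrightarrow> sqvac \<zeta> n = 0" unfolding sqvac_def by simp
  show ?thesis using partI[OF sqvac_norm[OF z] l0 od] by blast
qed


theorem mainTheorem3:
  shows
  "(\<forall>l. normalized l \<and> cmod (l 0) < 1 \<and> (\<forall>n. odd n \<longrightarrow> l n = 0) \<longrightarrow>
       Prob meas_parity meas_parity l 0 0 0 0 = 1 \<and>
       Prob meas_parity meas_parity l 0 0 1 1 = 1 \<and>
       Prob meas_parity meas_parity l 1 1 0 1 = 1 \<and>
       Prob meas_parity meas_parity l 1 1 1 0 = 1 \<and>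
       Jval meas_parity meas_parity l = 1 \<and>
       (\<forall>x\<in>{0,1}. \<forall>y\<in>{0,1}.
          Prob meas_parity meas_parity l ((x + y) mod 2) ((x + y) mod 2) x y = 1))
   \<and> (\<forall>l. normalized l \<and> cmod (l 0) < 1 \<and> (\<forall>n. even n \<longrightarrow> l n = 0) \<longrightarrow>
       Jval meas_flipped meas_parity l = 1)
   \<and> (\<forall>\<alpha> c. \<alpha> \<noteq> 0 \<and> normalized (\<lambda>n. c * (coh \<alpha> n + coh (- \<alpha>) n)) \<longrightarrow>
       Jval meas_parity meas_parity (\<lambda>n. c * (coh \<alpha> n + coh (- \<alpha>) n)) = 1)
   \<and> (\<forall>\<alpha> c. \<alpha> \<noteq> 0 \<and> normalized (\<lambda>n. c * (coh \<alpha> n - coh (- \<alpha>) n)) \<longrightarrow>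
       Jval meas_flipped meas_parity (\<lambda>n. c * (coh \<alpha> n - coh (- \<alpha>) n)) = 1)
   \<and> (\<forall>\<zeta>. \<zeta> \<noteq> 0 \<longrightarrow> Jval meas_parity meas_parity (sqvac \<zeta>) = 1)"
proof (intro conjI)
  show "\<forall>l. normalized l \<and> cmod (l 0) < 1 \<and> (\<forall>n. odd n \<longrightarrow> l n = 0) \<longrightarrow>
       Prob meas_parity meas_parity l 0 0 0 0 = 1 \<and>
       Prob meas_parity meas_parity l 0 0 1 1 = 1 \<and>
       Prob meas_parity meas_parity l 1 1 0 1 = 1 \<and>
       Prob meas_parity meas_parity l 1 1 1 0 = 1 \<and>
       Jval meas_parity meas_parity l = 1 \<and>
       (\<forall>x\<in>{0,1}. \<forall>y\<in>{0,1}.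
          Prob meas_parity meas_parity l ((x + y) mod 2) ((x + y) mod 2) x y = 1)"
    using partI by blast
  show "\<forall>l. normalized l \<and> cmod (l 0) < 1 \<and> (\<forall>n. even n \<longrightarrow> l n = 0) \<longrightarrow>
       Jval meas_flipped meas_parity l = 1"
    using partII by blast
  show "\<forall>\<alpha> c. \<alpha> \<noteq> 0 \<and> normalized (\<lambda>n. c * (coh \<alpha> n + coh (- \<alpha>) n)) \<longrightarrow>
       Jval meas_parity meas_parity (\<lambda>n. c * (coh \<alpha> n + coh (- \<alpha>) n)) = 1"
    using evencoh by blast
  show "\<forall>\<alpha> c. \<alpha> \<noteq> 0 \<and> normalized (\<lambda>n. c * (coh \<alpha> n - coh (- \<alpha>) n)) \<longrightarrow>
       Jval meas_flipped meas_parity (\<lambda>n. c * (coh \<alpha> n - coh (- \<alpha>) n)) = 1"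
    using oddcoh by blast
  show "\<forall>\<zeta>. \<zeta> \<noteq> 0 \<longrightarrow> Jval meas_parity meas_parity (sqvac \<zeta>) = 1"
    using sqvac_J by blast
qed

end
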